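(* Let $(\mathcal L_{0\,\mathcal N_0},\mathcal L_{1\,\mathcal N_1},t,\rho)$ be a crossed module of Nijenhuis Lie conformal algebras, where $\mathcal L_{0\,\mathcal N_0}=(\mathcal L_0,[\cdot_\lambda\cdot]_{\mathcal L_0},\mathcal N_0)$ and $\mathcal L_{1\,\mathcal N_1}=(\mathcal L_1,[\cdot_\lambda\cdot]_{\mathcal L_1},\mathcal N_1)$. Equip the $\mathbb C[\partial]$-module $\mathcal L_0\oplus\mathcal L_1$ with the $\lambda$-bracket $$[(p,m)_\lambda(q,n)]:=\big([p_\lambda q]_{\mathcal L_0},\ \rho(p)_\lambda n-\rho(q)_{-\partial-\lambda}m+[m_\lambda n]_{\mathcal L_1}\big),\qquad (p,m),(q,n)\in\mathcal L_0\oplus\mathcal L_1 .$$ Then $(\mathcal L_0\oplus\mathcal L_1,[\cdot_\lambda\cdot],\mathcal N_0\oplus\mathcal N_1)$ is a Nijenhuis Lie conformal algebra.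
   Context: All spaces are over $\mathbb C$. A Lie conformal algebra is a $\mathbb C[\partial]$-module with a $\mathbb C$-bilinear $\lambda$-bracket $[\cdot_\lambda\cdot]$ into $\mathcal L[\lambda]$ satisfying $[\partial a_\lambda b]=-\lambda[a_\lambda b]$, $[a_\lambda\partial b]=(\partial+\lambda)[a_\lambda b]$, $[a_\lambda b]=-[b_{-\partial-\lambda}a]$, $[a_\lambda[b_\mu c]]=[[a_\lambda b]_{\lambda+\mu}c]+[b_\mu[a_\lambda c]]$. A Nijenhuis operator on it is a $\mathbb C[\partial]$-linear $\mathcal N$ with $[\mathcal N(p)_\lambda\mathcal N(q)]=\mathcal N([\mathcal N(p)_\lambda q]+[p_\lambda\mathcal N(q)]-\mathcal N([p_\lambda q]))$; a Nijenhuis Lie conformal algebra is a Lie conformal algebra with a Nijenhuis operator; a morphism of such is a $\mathbb C[\partial]$-linear bracket-preserving map intertwining the Nijenhuis operators. A conformal representation of a Lie conformal algebra $\mathcal L$ on a $\mathbb C[\partial]$-module $\mathcal M$ is a $\mathbb C$-linear $\rho:\mathcal L\otimes\mathcal M\to\mathcal M[\lambda]$, $(p,m)\mapsto\rho(p)_\lambda m$, with $\rho(\partial p)_\lambda m=-\lambda\rho(p)_\lambda m$, $\rho(p)_\lambda\partial m=(\partial+\lambda)\rho(p)_\lambda m$, and $\rho(p)_\lambda(\rho(q)_\mu m)-\rho(q)_\mu(\rho(p)_\lambda m)=\rho([p_\lambda q])_{\lambda+\mu}m$. A representation of a Nijenhuis Lie conformal algebra $(\mathcal L,[\cdot_\lambda\cdot],\mathcal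 N)$ is a triple $(\mathcal M,\rho,\mathcal N_{\mathcal M})$ with $\rho$ a conformal representation and $\mathcal N_{\mathcal M}$ a $\mathbb C[\partial]$-linear map with $\rho(\mathcal N(p))_\lambda\mathcal N_{\mathcal M}(m)=\mathcal N_{\mathcal M}\big(\rho(\mathcal N(p))_\lambda m+\rho(p)_\lambda\mathcal N_{\mathcal M}(m)-\mathcal N_{\mathcal M}(\rho(p)_\lambda m)\big)$. A crossed module of Nijenhuis Lie conformal algebras is a quadruple $(\mathcal L_{0\,\mathcal N_0},\mathcal L_{1\,\mathcal N_1},t,\rho)$ where $\mathcal L_{0\,\mathcal N_0},\mathcal L_{1\,\mathcal N_1}$ are Nijenhuis Lie conformal algebras, $t:\mathcal L_1\to\mathcal L_0$ is a morphism of Nijenhuis Lie conformal algebras, and $\rho:\mathcal L_0\otimes\mathcal L_1\to\mathcal L_1[\lambda]$ is conformal sesquilinear and makes $(\mathcal L_1,\rho,\mathcal N_1)$ a representation of $\mathcal L_{0\,\mathcal N_0}$, such that $t(\rho(p)_\lambda m)=[p_\lambda t(m)]_{\mathcal L_0}$ and $\rho(t(m))_\lambda n=[m_\lambda n]_{\mathcal L_1}$ for all $p\in\mathcal L_0$, $m,n\in\mathcal L_1$. *)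

theory Defs
  imports Complex_Main "HOL-Computational_Algebra.Polynomial" "HOL-Library.Product_Plus"
begin

text \<open>
  A C[d]-module is a type 'a :: ab_group_add with a complex scalar
  multiplication s (a module in the sense of the locale module) and a C-linear
  operator D (the action of d). An element of L[lambda] is an 'a poly whose k-th
  coefficient is the coefficient of lambda^k.
\<close>

definition cdmodule :: "(complex \<Rightarrow> 'a::ab_group_add \<Rightarrow> 'a) \<Rightarrow> ('a \<Rightarrow> 'a) \<Rightarrow> bool" where
  "cdmodule s D \<longleftrightarrow> module s \<and> module_hom s s D"

definition cdlinear ::
  "(complex \<Rightarrow> 'a::ab_group_add \<Rightarrow> 'a) \<Rightarrow> ('a \<Rightarrow> 'a) \<Rightarrow>
   (complex \<Rightarrow> 'b::ab_group_add \<Rightarrow> 'b) \<Rightarrow> ('b \<Rightarrow> 'b) \<Rightarrow> ('a \<Rightarrow> 'b) \<Rightarrow> bool" where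
  "cdlinear s D s' D' f \<longleftrightarrow> module_hom s s' f \<and> (\<forall>x. f (D x) = D' (f x))"

definition lam_mul :: "'a::zero poly \<Rightarrow> 'a poly" where
  "lam_mul p = pCons 0 p"

definition Dpoly :: "('a::zero \<Rightarrow> 'a) \<Rightarrow> 'a poly \<Rightarrow> 'a poly" where
  "Dpoly D p = map_poly D p"

definition spoly :: "(complex \<Rightarrow> 'a::zero \<Rightarrow> 'a) \<Rightarrow> complex \<Rightarrow> 'a poly \<Rightarrow> 'a poly" where
  "spoly s c p = map_poly (s c) p"

definition peval :: "(complex \<Rightarrow> 'a::comm_monoid_add \<Rightarrow> 'a) \<Rightarrow> 'a poly \<Rightarrow> complex \<Rightarrow> 'a" where
  "peval s p z = (\<Sum>k\<le>degree p. s (z ^ k) (coeff p k))"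

text \<open>Substitution lambda := -d-lambda: for p = sum_k lambda^k c_k,
  neg_subst D p = sum_k (-d-lambda)^k c_k (d acting on the coefficients).\<close>
definition neg_shift :: "('a::ab_group_add \<Rightarrow> 'a) \<Rightarrow> 'a poly \<Rightarrow> 'a poly" where
  "neg_shift D q = - Dpoly D q - lam_mul q"

definition neg_subst :: "('a::ab_group_add \<Rightarrow> 'a) \<Rightarrow> 'a poly \<Rightarrow> 'a poly" where
  "neg_subst D p = (\<Sum>k\<le>degree p. (neg_shift D ^^ k) [:coeff p k:])"

definition bilinear_lam ::
  "(complex \<Rightarrow> 'a::ab_group_add \<Rightarrow> 'a) \<Rightarrow> (complex \<Rightarrow> 'b::ab_group_add \<Rightarrow> 'b) \<Rightarrow>
   (complex \<Rightarrow> 'c::ab_group_add \<Rightarrow> 'c) \<Rightarrow> ('a \<Rightarrow> 'b \<Rightarrow> 'c poly) \<Rightarrow> bool" where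
  "bilinear_lam sa sb sc f \<longleftrightarrow>
     (\<forall>x y z. f (x + y) z = f x z + f y z) \<and>
     (\<forall>c x z. f (sa c x) z = spoly sc c (f x z)) \<and>
     (\<forall>x y z. f x (y + z) = f x y + f x z) \<and>
     (\<forall>c x z. f x (sb c z) = spoly sc c (f x z))"

definition sesquilinear ::
  "('a \<Rightarrow> 'a) \<Rightarrow> ('b::ab_group_add \<Rightarrow> 'b) \<Rightarrow> ('a \<Rightarrow> 'b \<Rightarrow> 'b poly) \<Rightarrow> bool" where
  "sesquilinear DA DB f \<longleftrightarrow>
     (\<forall>a b. f (DA a) b = - lam_mul (f a b)) \<and>
     (\<forall>a b. f a (DB b) = Dpoly DB (f a b) + lam_mul (f a b))"

text \<open>Lie conformal algebra. The Jacobi identity is an identity in L[lambda,mu];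
  it is stated by evaluating lambda, mu at all complex numbers.\<close>
definition LCA :: "(complex \<Rightarrow> 'a::ab_group_add \<Rightarrow> 'a) \<Rightarrow> ('a \<Rightarrow> 'a) \<Rightarrow> ('a \<Rightarrow> 'a \<Rightarrow> 'a poly) \<Rightarrow> bool" where
  "LCA s D br \<longleftrightarrow>
     cdmodule s D \<and> bilinear_lam s s s br \<and> sesquilinear D D br \<and>
     (\<forall>a b. br a b = - neg_subst D (br b a)) \<and>
     (\<forall>a b c l m.
        peval s (br a (peval s (br b c) m)) l =
        peval s (br (peval s (br a b) l) c) (l + m) + peval s (br b (peval s (br a c) l)) m)"

definition nijenhuis :: "('a::ab_group_add \<Rightarrow> 'a \<Rightarrow> 'a poly) \<Rightarrow> ('a \<Rightarrow> 'a) \<Rightarrow> bool" where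
  "nijenhuis br N \<longleftrightarrow>
     (\<forall>p q. br (N p) (N q) = map_poly N (br (N p) q + br p (N q) - map_poly N (br p q)))"

definition NLCA ::
  "(complex \<Rightarrow> 'a::ab_group_add \<Rightarrow> 'a) \<Rightarrow> ('a \<Rightarrow> 'a) \<Rightarrow> ('a \<Rightarrow> 'a \<Rightarrow> 'a poly) \<Rightarrow> ('a \<Rightarrow> 'a) \<Rightarrow> bool" where
  "NLCA s D br N \<longleftrightarrow> LCA s D br \<and> cdlinear s D s D N \<and> nijenhuis br N"

definition NLCA_morphism ::
  "(complex \<Rightarrow> 'a::ab_group_add \<Rightarrow> 'a) \<Rightarrow> ('a \<Rightarrow> 'a) \<Rightarrow> ('a \<Rightarrow> 'a \<Rightarrow> 'a poly) \<Rightarrow> ('a \<Rightarrow> 'a) \<Rightarrow>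
   (complex \<Rightarrow> 'b::ab_group_add \<Rightarrow> 'b) \<Rightarrow> ('b \<Rightarrow> 'b) \<Rightarrow> ('b \<Rightarrow> 'b \<Rightarrow> 'b poly) \<Rightarrow> ('b \<Rightarrow> 'b) \<Rightarrow>
   ('a \<Rightarrow> 'b) \<Rightarrow> bool" where
  "NLCA_morphism s D br N s' D' br' N' f \<longleftrightarrow>
     cdlinear s D s' D' f \<and>
     (\<forall>a b. map_poly f (br a b) = br' (f a) (f b)) \<and>
     (\<forall>a. f (N a) = N' (f a))"

definition conf_rep ::
  "(complex \<Rightarrow> 'a::ab_group_add \<Rightarrow> 'a) \<Rightarrow> ('a \<Rightarrow> 'a) \<Rightarrow> ('a \<Rightarrow> 'a \<Rightarrow> 'a poly) \<Rightarrow>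
   (complex \<Rightarrow> 'm::ab_group_add \<Rightarrow> 'm) \<Rightarrow> ('m \<Rightarrow> 'm) \<Rightarrow> ('a \<Rightarrow> 'm \<Rightarrow> 'm poly) \<Rightarrow> bool" where
  "conf_rep s D br sM DM rho \<longleftrightarrow>
     cdmodule sM DM \<and> bilinear_lam s sM sM rho \<and> sesquilinear D DM rho \<and>
     (\<forall>p q m l mu.
        peval sM (rho p (peval sM (rho q m) mu)) l - peval sM (rho q (peval sM (rho p m) l)) mu =
        peval sM (rho (peval s (br p q) l) m) (l + mu))"

definition NLCA_rep ::
  "(complex \<Rightarrow> 'a::ab_group_add \<Rightarrow> 'a) \<Rightarrow> ('a \<Rightarrow> 'a) \<Rightarrow> ('a \<Rightarrow> 'a \<Rightarrow> 'a poly) \<Rightarrow> ('a \<Rightarrow> 'a) \<Rightarrow>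
   (complex \<Rightarrow> 'm::ab_group_add \<Rightarrow> 'm) \<Rightarrow> ('m \<Rightarrow> 'm) \<Rightarrow> ('a \<Rightarrow> 'm \<Rightarrow> 'm poly) \<Rightarrow> ('m \<Rightarrow> 'm) \<Rightarrow> bool" where
  "NLCA_rep s D br N sM DM rho NM \<longleftrightarrow>
     conf_rep s D br sM DM rho \<and> cdlinear sM DM sM DM NM \<and>
     (\<forall>p m. rho (N p) (NM m) =
        map_poly NM (rho (N p) m + rho p (NM m) - map_poly NM (rho p m)))"

definition crossed_module ::
  "(complex \<Rightarrow> 'a::ab_group_add \<Rightarrow> 'a) \<Rightarrow> ('a \<Rightarrow> 'a) \<Rightarrow> ('a \<Rightarrow> 'a \<Rightarrow> 'a poly) \<Rightarrow> ('a \<Rightarrow> 'a) \<Rightarrow>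
   (complex \<Rightarrow> 'b::ab_group_add \<Rightarrow> 'b) \<Rightarrow> ('b \<Rightarrow> 'b) \<Rightarrow> ('b \<Rightarrow> 'b \<Rightarrow> 'b poly) \<Rightarrow> ('b \<Rightarrow> 'b) \<Rightarrow>
   ('b \<Rightarrow> 'a) \<Rightarrow> ('a \<Rightarrow> 'b \<Rightarrow> 'b poly) \<Rightarrow> bool" where
  "crossed_module s0 D0 br0 N0 s1 D1 br1 N1 t rho \<longleftrightarrow>
     NLCA s0 D0 br0 N0 \<and> NLCA s1 D1 br1 N1 \<and>
     NLCA_morphism s1 D1 br1 N1 s0 D0 br0 N0 t \<and>
     NLCA_rep s0 D0 br0 N0 s1 D1 rho N1 \<and>
     (\<forall>p m. map_poly t (rho p m) = br0 p (t m)) \<and>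
     (\<forall>m n. rho (t m) n = br1 m n)"

definition pair_poly :: "'a::comm_monoid_add poly \<Rightarrow> 'b::comm_monoid_add poly \<Rightarrow> ('a \<times> 'b) poly" where
  "pair_poly P Q = map_poly (\<lambda>x. (x, 0)) P + map_poly (\<lambda>y. (0, y)) Q"

end

theory Submission
  imports Defs
begin
definition gsum :: "('m::ab_group_add \<Rightarrow> 'm) \<Rightarrow> ('a::zero \<Rightarrow> 'm) \<Rightarrow> 'a poly \<Rightarrow> 'm" where
  "gsum E f P = (\<Sum>k\<le>degree P. (E^^k) (f (coeff P k)))"

definition addh :: "('a::ab_group_add \<Rightarrow> 'b::ab_group_add) \<Rightarrow> bool" where
  "addh h \<longleftrightarrow> (\<forall>x y. h (x + y) = h x + h y)"

lemma addh_zero: "addh h \<Longrightarrow> h 0 = 0"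
  unfolding addh_def by (metis add_cancel_left_left add_0)

lemma addh_add: "addh h \<Longrightarrow> h (x + y) = h x + h y"
  unfolding addh_def by blast

lemma addh_minus: "addh h \<Longrightarrow> h (- x) = - h x"
proof -
  assume a: "addh h"
  have "h (- x) + h x = 0" using addh_add[OF a, of "-x" x] addh_zero[OF a] by simp
  then show ?thesis by (simp add: add_eq_0_iff2)
qed

lemma addh_diff: "addh h \<Longrightarrow> h (x - y) = h x - h y"
  using addh_add[of h x "-y"] addh_minus[of h y] by simp

lemma addh_sum: "addh h \<Longrightarrow> h (sum g A) = (\<Sum>x\<in>A. h (g x))"
  by (induct A rule: infinite_finite_induct) (simp_all add: addh_zero addh_add)

lemma addh_funpow: "addh (h::'a::ab_group_add \<Rightarrow> 'a) \<Longrightarrow> addh (h^^k)"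
proof (induct k)
  case 0 then show ?case by (simp add: addh_def funpow_0)
next
  case (Suc k) then show ?case unfolding addh_def by (simp add: addh_add)
qed

lemma addh_comp: "addh g \<Longrightarrow> addh h \<Longrightarrow> addh (g \<circ> h)"
  by (auto simp: addh_def)

lemma gsum_bound:
  assumes "addh E" "f 0 = 0" "degree P \<le> n"
  shows "gsum E f P = (\<Sum>k\<le>n. (E^^k) (f (coeff P k)))"
  unfolding gsum_def
proof (rule sum.mono_neutral_left)
  show "\<forall>i\<in>{..n} - {..degree P}. (E ^^ i) (f (coeff P i)) = 0"
    using assms by (auto simp: coeff_eq_0 addh_zero addh_funpow)
qed (use assms in auto)

lemma gsum_0[simp]: "f 0 = 0 \<Longrightarrow> gsum E f 0 = 0"
  by (simp add: gsum_def)

lemma gsum_pCons: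
  assumes "addh E" "f 0 = 0"
  shows "gsum E f (pCons a P) = f a + E (gsum E f P)"
proof -
  have "gsum E f (pCons a P) = (\<Sum>k\<le>Suc (degree P). (E^^k) (f (coeff (pCons a P) k)))"
    by (rule gsum_bound[of E f, OF assms]) (simp add: degree_pCons_le)
  also have "\<dots> = f a + (\<Sum>k\<le>degree P. E ((E^^k) (f (coeff P k))))"
    by (subst sum.atMost_Suc_shift) (simp add: funpow_swap1)
  also have "\<dots> = f a + E (gsum E f P)"
    by (simp add: gsum_def addh_sum[OF assms(1)])
  finally show ?thesis .
qed

lemma gsum_add:
  assumes "addh E" "addh f"
  shows "gsum E f (P + Q) = gsum E f P + gsum E f Q"
proof -
  let ?n = "max (degree P) (degree Q)"
  have z: "f 0 = 0" using assms addh_zero by blast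
  have "gsum E f (P + Q) = (\<Sum>k\<le>?n. (E^^k) (f (coeff (P+Q) k)))"
    by (rule gsum_bound[of E f, OF assms(1) z]) (simp add: degree_add_le)
  also have "\<dots> = (\<Sum>k\<le>?n. (E^^k) (f (coeff P k))) + (\<Sum>k\<le>?n. (E^^k) (f (coeff Q k)))"
    by (simp add: addh_add[OF assms(2)] addh_add[OF addh_funpow[OF assms(1)]] sum.distrib)
  also have "\<dots> = gsum E f P + gsum E f Q"
    by (simp add: gsum_bound[of E f P ?n, OF assms(1) z] gsum_bound[of E f Q ?n, OF assms(1) z])
  finally show ?thesis .
qed

lemma addh_gsum: "addh E \<Longrightarrow> addh f \<Longrightarrow> addh (gsum E f)"
  by (simp add: addh_def gsum_add)

lemma gsum_map:
  assumes "addh E" "f 0 = 0" "h 0 = 0"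
  shows "gsum E f (map_poly h P) = gsum E (f \<circ> h) P"
proof -
  have "gsum E f (map_poly h P) = (\<Sum>k\<le>degree P. (E^^k) (f (coeff (map_poly h P) k)))"
    by (rule gsum_bound[of E f, OF assms(1,2)]) (simp add: map_poly_degree_leq)
  then show ?thesis by (simp add: gsum_def coeff_map_poly assms)
qed

lemma gsum_comm:
  assumes "addh g" "\<And>x. g (E x) = E' (g x)"
  shows "g (gsum E f P) = gsum E' (g \<circ> f) P"
proof -
  have "g ((E^^k) x) = (E'^^k) (g x)" for k x
    by (induct k) (simp_all add: assms)
  then show ?thesis by (simp add: gsum_def addh_sum[OF assms(1)])
qed

lemma map_poly_addh: "addh h \<Longrightarrow> map_poly h (P + Q) = map_poly h P + map_poly h Q"
  by (intro poly_eqI) (simp add: coeff_map_poly addh_zero addh_add)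

lemma addh_map_poly: "addh h \<Longrightarrow> addh (map_poly h)"
  unfolding addh_def using map_poly_addh addh_def by blast

lemma map_poly_minus': "addh h \<Longrightarrow> map_poly h (- P) = - map_poly h P"
  using addh_minus[OF addh_map_poly] by blast

lemma map_poly_diff': "addh h \<Longrightarrow> map_poly h (P - Q) = map_poly h P - map_poly h Q"
  using addh_diff[OF addh_map_poly] by blast

lemma addh_lam: "addh lam_mul"
  by (simp add: addh_def lam_mul_def)

lemma addh_const: "addh (\<lambda>c. [:c:])"
  by (simp add: addh_def)

lemma addh_neg_shift: "addh D \<Longrightarrow> addh (neg_shift D)"
  by (simp add: addh_def neg_shift_def Dpoly_def lam_mul_def map_poly_addh algebra_simps)

lemma neg_shift_0[simp]: "addh D \<Longrightarrow> neg_shift D 0 = 0"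
  using addh_zero[OF addh_neg_shift] by blast

lemma neg_subst_gsum: "neg_subst D P = gsum (neg_shift D) (\<lambda>c. [:c:]) P"
  by (simp add: neg_subst_def gsum_def)

lemma ns_pCons: "addh D \<Longrightarrow> neg_subst D (pCons a P) = [:a:] + neg_shift D (neg_subst D P)"
  unfolding neg_subst_gsum by (rule gsum_pCons[OF addh_neg_shift]) simp_all

lemma ns_0[simp]: "neg_subst D 0 = 0"
  unfolding neg_subst_gsum by simp

lemma addh_ns: "addh D \<Longrightarrow> addh (neg_subst D)"
  unfolding neg_subst_gsum[abs_def] by (rule addh_gsum[OF addh_neg_shift addh_const])

lemma ns_add: "addh D \<Longrightarrow> neg_subst D (P + Q) = neg_subst D P + neg_subst D Q"
  using addh_ns addh_add by blast
lemma ns_minus: "addh D \<Longrightarrow> neg_subst D (- P) = - neg_subst D P"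
  using addh_ns addh_minus by blast
lemma ns_diff: "addh D \<Longrightarrow> neg_subst D (P - Q) = neg_subst D P - neg_subst D Q"
  using addh_ns addh_diff by blast

lemma ns_map:
  assumes h: "addh h" and D': "addh D'" and D: "addh D" and c: "\<And>x. h (D' x) = D (h x)"
  shows "neg_subst D (map_poly h P) = map_poly h (neg_subst D' P)"
proof -
  have "neg_subst D (map_poly h P) = gsum (neg_shift D) ((\<lambda>c. [:c:]) \<circ> h) P"
    unfolding neg_subst_gsum by (rule gsum_map[OF addh_neg_shift[OF D]]) (simp_all add: addh_zero[OF h])
  also have "\<dots> = gsum (neg_shift D) (map_poly h \<circ> (\<lambda>c. [:c:])) P"
    by (simp add: o_def map_poly_pCons addh_zero[OF h])
  also have "\<dots> = map_poly h (neg_subst D' P)"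
    unfolding neg_subst_gsum
  proof (rule gsum_comm[symmetric, OF addh_map_poly[OF h]])
    fix x
    show "map_poly h (neg_shift D' x) = neg_shift D (map_poly h x)"
      unfolding neg_shift_def Dpoly_def lam_mul_def
      by (simp add: map_poly_diff'[OF h] map_poly_minus'[OF h] map_poly_pCons addh_zero[OF h]
          map_poly_map_poly addh_zero[OF D'] addh_zero[OF D] o_def c)
  qed
  finally show ?thesis .
qed

lemma ns_lam: "addh D \<Longrightarrow> neg_subst D (lam_mul P) = neg_shift D (neg_subst D P)"
  unfolding lam_mul_def by (simp add: ns_pCons)

lemma ns_Dpoly: "addh D \<Longrightarrow> neg_subst D (Dpoly D P) = Dpoly D (neg_subst D P)"
  unfolding Dpoly_def by (rule ns_map) auto

lemma ns_shift: "addh D \<Longrightarrow> neg_subst D (neg_shift D Q) = lam_mul (neg_subst D Q)"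
  unfolding neg_shift_def
  by (simp add: ns_diff ns_minus ns_Dpoly ns_lam) (simp add: neg_shift_def)

lemma ns_invol: "addh D \<Longrightarrow> neg_subst D (neg_subst D P) = P"
proof (induct P)
  case 0 then show ?case by simp
next
  case (pCons a p)
  then show ?case
    by (simp add: ns_pCons ns_add ns_shift) (simp add: lam_mul_def ns_pCons[where P=0, simplified] add_pCons[of a 0 0 p, simplified])
qed

definition opv :: "('m::ab_group_add \<Rightarrow> 'm) \<Rightarrow> 'm poly \<Rightarrow> 'm" where
  "opv E P = gsum E id P"

lemma addh_scale: "module s \<Longrightarrow> addh (s z)"
  by (simp add: addh_def module.scale_right_distrib)

lemma peval_opv: assumes "module s" shows "peval s P z = opv (s z) P"
proof -
  have "s (z ^ k) x = (s z ^^ k) x" for k x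
  proof (induct k)
    case 0 then show ?case by (simp add: module.scale_one[OF assms])
  next
    case (Suc k) then show ?case using module.scale_scale[OF assms, of z "z^k" x] by simp
  qed
  then show ?thesis by (simp add: peval_def opv_def gsum_def)
qed

lemma opv_pCons: "addh E \<Longrightarrow> opv E (pCons a P) = a + E (opv E P)"
  unfolding opv_def by (simp add: gsum_pCons)

lemma opv_0[simp]: "opv E 0 = 0"
  unfolding opv_def by simp

lemma opv_const[simp]: "addh E \<Longrightarrow> opv E [:a:] = a"
  by (simp add: opv_pCons addh_zero)

lemma addh_opv: "addh E \<Longrightarrow> addh (opv E)"
  unfolding opv_def[abs_def] by (rule addh_gsum) (simp_all add: addh_def)

lemma opv_add: "addh E \<Longrightarrow> opv E (P + Q) = opv E P + opv E Q"
  using addh_opv addh_add by blast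
lemma opv_minus: "addh E \<Longrightarrow> opv E (- P) = - opv E P"
  using addh_opv addh_minus by blast
lemma opv_diff: "addh E \<Longrightarrow> opv E (P - Q) = opv E P - opv E Q"
  using addh_opv addh_diff by blast

lemma opv_map:
  assumes "addh E" "addh E'" "addh h" "\<And>x. h (E x) = E' (h x)"
  shows "opv E' (map_poly h P) = h (opv E P)"
proof -
  have "opv E' (map_poly h P) = gsum E' (id \<circ> h) P"
    unfolding opv_def by (rule gsum_map) (simp_all add: assms addh_zero)
  also have "h (opv E P) = gsum E' (h \<circ> id) P"
    unfolding opv_def by (rule gsum_comm) (simp_all add: assms)
  then have "gsum E' (id \<circ> h) P = h (opv E P)" by simp
  finally show ?thesis .
qed

lemma opv_lam: "addh E \<Longrightarrow> opv E (lam_mul P) = E (opv E P)"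
  by (simp add: lam_mul_def opv_pCons)

lemma opv_ns:
  assumes D: "addh D" and E: "addh E" and c: "\<And>x. D (E x) = E (D x)"
  shows "opv E (neg_subst D P) = opv (\<lambda>x. - D x - E x) P"
proof -
  have "opv E (neg_subst D P) = gsum (\<lambda>x. - D x - E x) (opv E \<circ> (\<lambda>c. [:c:])) P"
    unfolding neg_subst_gsum
  proof (rule gsum_comm[OF addh_opv[OF E]])
    fix Q
    show "opv E (neg_shift D Q) = - D (opv E Q) - E (opv E Q)"
      unfolding neg_shift_def Dpoly_def
      by (simp add: opv_diff opv_minus E opv_lam opv_map[OF E E D] c)
  qed
  also have "\<dots> = opv (\<lambda>x. - D x - E x) P"
    using opv_const[OF E, unfolded opv_def] by (simp add: opv_def o_def id_def)
  finally show ?thesis .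
qed

lemma opv_mult_poly: "opv ((*) z) Q = poly Q (z::complex)"
  by (induct Q) (simp_all add: opv_pCons addh_def distrib_left)

lemma vanish:
  fixes s :: "complex \<Rightarrow> 'm::ab_group_add \<Rightarrow> 'm"
  assumes m: "module s" and z: "\<And>z. opv (s z) P = 0"
  shows "P = 0"
proof (rule ccontr)
  assume "P \<noteq> 0"
  then obtain k where ck: "coeff P k \<noteq> 0" by (metis leading_coeff_0_iff)
  define c where "c = coeff P k"
  interpret vs: vector_space s
    using m by (simp add: vector_space_def module_def)
  define B where "B = vs.extend_basis {c}"
  have indc: "vs.independent {c}"
    using ck c_def vs.independent_insert vs.independent_empty vs.span_empty by auto
  have cB: "c \<in> B" and indB: "vs.independent B" and spB: "vs.span B = UNIV"
    using vs.extend_basis_superset[OF indc] vs.independent_extend_basis[OF indc]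
      vs.span_extend_basis[OF indc] B_def by auto
  define phi where "phi v = vs.representation B v c" for v
  have phiadd: "addh phi"
    by (simp add: addh_def phi_def vs.representation_add[OF indB] spB)
  have phiscale: "phi (s z x) = z * phi x" for z x
    by (simp add: phi_def vs.representation_scale[OF indB] spB)
  have addhm: "addh ((*) z)" for z :: complex by (simp add: addh_def distrib_left)
  have "poly (map_poly phi P) z = 0" for z
  proof -
    have "poly (map_poly phi P) z = opv ((*) z) (map_poly phi P)"
      by (simp add: opv_mult_poly)
    also have "\<dots> = phi (opv (s z) P)"
      by (rule opv_map) (simp_all add: addh_scale[OF m] phiadd phiscale addhm)
    also have "\<dots> = 0" using z addh_zero[OF phiadd] by simp
    finally show ?thesis .
  qed
  then have "map_poly phi P = 0" using poly_all_0_iff_0 by blast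
  then have "phi c = 0"
    using coeff_map_poly[of phi P k] addh_zero[OF phiadd] c_def by simp
  moreover have "phi c = 1"
    by (simp add: phi_def vs.representation_basis[OF indB cB])
  ultimately show False by simp
qed

locale cm =
  fixes s0 :: "complex \<Rightarrow> 'a::ab_group_add \<Rightarrow> 'a" and D0 :: "'a \<Rightarrow> 'a"
    and br0 :: "'a \<Rightarrow> 'a \<Rightarrow> 'a poly" and N0 :: "'a \<Rightarrow> 'a"
    and s1 :: "complex \<Rightarrow> 'b::ab_group_add \<Rightarrow> 'b" and D1 :: "'b \<Rightarrow> 'b"
    and br1 :: "'b \<Rightarrow> 'b \<Rightarrow> 'b poly" and N1 :: "'b \<Rightarrow> 'b"
    and t :: "'b \<Rightarrow> 'a" and rho :: "'a \<Rightarrow> 'b \<Rightarrow> 'b poly"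
  assumes cm: "crossed_module s0 D0 br0 N0 s1 D1 br1 N1 t rho"
begin

lemma cmu: "NLCA s0 D0 br0 N0 \<and> NLCA s1 D1 br1 N1 \<and>
     NLCA_morphism s1 D1 br1 N1 s0 D0 br0 N0 t \<and>
     NLCA_rep s0 D0 br0 N0 s1 D1 rho N1 \<and>
     (\<forall>p m. map_poly t (rho p m) = br0 p (t m)) \<and>
     (\<forall>m n. rho (t m) n = br1 m n)"
  using cm unfolding crossed_module_def .

lemma N0all: "NLCA s0 D0 br0 N0" using cmu by (rule conjunct1)
lemma N1all: "NLCA s1 D1 br1 N1" using conjunct1[OF conjunct2[OF cmu]] .
lemma tm: "NLCA_morphism s1 D1 br1 N1 s0 D0 br0 N0 t"
  using conjunct1[OF conjunct2[OF conjunct2[OF cmu]]] .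
lemma rep: "NLCA_rep s0 D0 br0 N0 s1 D1 rho N1"
  using conjunct1[OF conjunct2[OF conjunct2[OF conjunct2[OF cmu]]]] .
lemma trho: "map_poly t (rho p m) = br0 p (t m)"
  using conjunct1[OF conjunct2[OF conjunct2[OF conjunct2[OF conjunct2[OF cmu]]]]] by blast
lemma rhot: "rho (t m) n = br1 m n"
  using conjunct2[OF conjunct2[OF conjunct2[OF conjunct2[OF conjunct2[OF cmu]]]]] by blast

lemma L0: "LCA s0 D0 br0" using N0all unfolding NLCA_def by (rule conjunct1)
lemma L1: "LCA s1 D1 br1" using N1all unfolding NLCA_def by (rule conjunct1)
lemma N0c: "cdlinear s0 D0 s0 D0 N0" using N0all unfolding NLCA_def by (metis (no_types))
lemma N1c: "cdlinear s1 D1 s1 D1 N1" using N1all unfolding NLCA_def by (metis (no_types))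
lemma N0n: "nijenhuis br0 N0" using N0all unfolding NLCA_def by (metis (no_types))
lemma N1n: "nijenhuis br1 N1" using N1all unfolding NLCA_def by (metis (no_types))

lemma m0: "module s0" using L0 unfolding LCA_def cdmodule_def by (metis (no_types))
lemma m1: "module s1" using L1 unfolding LCA_def cdmodule_def by (metis (no_types))
lemma D0h: "module_hom s0 s0 D0" using L0 unfolding LCA_def cdmodule_def by (metis (no_types))
lemma D1h: "module_hom s1 s1 D1" using L1 unfolding LCA_def cdmodule_def by (metis (no_types))

lemma addD0: "addh D0" and addD1: "addh D1"
  using D0h D1h unfolding module_hom_iff addh_def by auto
lemma D0s: "D0 (s0 c x) = s0 c (D0 x)" and D1s: "D1 (s1 c y) = s1 c (D1 y)"
  using D0h D1h unfolding module_hom_iff by auto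

lemma adds0: "addh (s0 z)" and adds1: "addh (s1 z)"
  using addh_scale m0 m1 by auto

lemma s1_add: "s1 (a + b) x = s1 a x + s1 b x"
  using m1 module.scale_left_distrib by metis
lemma s1_diff: "s1 (a - b) x = s1 a x - s1 b x"
  using m1 module.scale_left_diff_distrib by metis
lemma s1_comm: "s1 a (s1 b x) = s1 b (s1 a x)"
  using m1 module.scale_left_commute by metis
lemma s0_add: "s0 (a + b) x = s0 a x + s0 b x"
  using m0 module.scale_left_distrib by metis
lemma s0_comm: "s0 a (s0 b x) = s0 b (s0 a x)"
  using m0 module.scale_left_commute by metis

definition EE :: "complex \<Rightarrow> 'b \<Rightarrow> 'b" where "EE z x = - D1 x - s1 z x"
definition EE0 :: "complex \<Rightarrow> 'a \<Rightarrow> 'a" where "EE0 z x = - D0 x - s0 z x"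

lemma addEE: "addh (EE z)"
  unfolding addh_def EE_def by (simp add: addh_add[OF addD1] addh_add[OF adds1])
lemma addEE0: "addh (EE0 z)"
  unfolding addh_def EE0_def by (simp add: addh_add[OF addD0] addh_add[OF adds0])

lemma D1EE: "D1 (EE z x) = EE z (D1 x)"
  unfolding EE_def by (simp only: addh_diff[OF addD1] addh_minus[OF addD1] D1s)
lemma s1EE: "s1 c (EE z x) = EE z (s1 c x)"
  unfolding EE_def by (simp only: addh_diff[OF adds1] addh_minus[OF adds1] D1s s1_comm[of c z])
lemma D0EE: "D0 (EE0 z x) = EE0 z (D0 x)"
  unfolding EE0_def by (simp only: addh_diff[OF addD0] addh_minus[OF addD0] D0s)

lemma ev1_ns: "opv (s1 z) (neg_subst D1 P) = opv (EE z) P"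
proof -
  have "opv (s1 z) (neg_subst D1 P) = opv (\<lambda>x. - D1 x - s1 z x) P"
    by (rule opv_ns[OF addD1 adds1]) (simp add: D1s)
  then show ?thesis by (simp add: EE_def[abs_def])
qed

lemma ev0_ns: "opv (s0 z) (neg_subst D0 P) = opv (EE0 z) P"
proof -
  have "opv (s0 z) (neg_subst D0 P) = opv (\<lambda>x. - D0 x - s0 z x) P"
    by (rule opv_ns[OF addD0 adds0]) (simp add: D0s)
  then show ?thesis by (simp add: EE0_def[abs_def])
qed

definition goodg :: "('b \<Rightarrow> 'b poly) \<Rightarrow> bool" where
  "goodg g \<longleftrightarrow> addh g \<and> (\<forall>c x. g (s1 c x) = map_poly (s1 c) (g x)) \<and>
     (\<forall>x. g (D1 x) = Dpoly D1 (g x) + lam_mul (g x))"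

lemma opv_s1map: "addh E \<Longrightarrow> (\<And>x. s1 c (E x) = E (s1 c x)) \<Longrightarrow> opv E (map_poly (s1 c) P) = s1 c (opv E P)"
  by (rule opv_map) (simp_all add: adds1)

lemma opv_D1: "addh E \<Longrightarrow> (\<And>x. D1 (E x) = E (D1 x)) \<Longrightarrow> opv E (Dpoly D1 P) = D1 (opv E P)"
  unfolding Dpoly_def by (rule opv_map) (simp_all add: addD1)

lemma opv_EE_s1map: "opv (EE z) (map_poly (s1 c) P) = s1 c (opv (EE z) P)"
  by (rule opv_s1map[OF addEE s1EE])
lemma opv_EE_D1: "opv (EE z) (Dpoly D1 P) = D1 (opv (EE z) P)"
  by (rule opv_D1[OF addEE D1EE])
lemma opv_s1_s1map: "opv (s1 z) (map_poly (s1 c) P) = s1 c (opv (s1 z) P)"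
  by (rule opv_s1map[OF adds1 s1_comm])
lemma opv_s1_D1: "opv (s1 z) (Dpoly D1 P) = D1 (opv (s1 z) P)"
  by (rule opv_D1[OF adds1]) (simp add: D1s)

lemma goodg_add: "goodg g \<Longrightarrow> addh g"
  using goodg_def by blast
lemma goodg_s: "goodg g \<Longrightarrow> g (s1 c x) = map_poly (s1 c) (g x)"
  using goodg_def by blast
lemma goodg_D: "goodg g \<Longrightarrow> g (D1 x) = Dpoly D1 (g x) + lam_mul (g x)"
  using goodg_def by blast

lemma goodg_EEexp:
  assumes g: "goodg g"
  shows "g (EE mu y) = - Dpoly D1 (g y) - lam_mul (g y) - map_poly (s1 mu) (g y)"
  unfolding EE_def using g
  by (simp add: addh_diff[OF goodg_add[OF g]] addh_minus[OF goodg_add[OF g]] goodg_s goodg_D)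

lemma goodg_EE:
  assumes g: "goodg g"
  shows "opv (s1 l) (g (EE mu y)) = EE (l + mu) (opv (s1 l) (g y))"
proof -
  have "opv (s1 l) (g (EE mu y)) = - D1 (opv (s1 l) (g y)) - s1 l (opv (s1 l) (g y)) - s1 mu (opv (s1 l) (g y))"
    unfolding goodg_EEexp[OF g]
    by (simp only: opv_diff[OF adds1] opv_minus[OF adds1] opv_lam[OF adds1] opv_s1_D1 opv_s1_s1map)
  then show ?thesis by (simp add: EE_def s1_add)
qed

lemma sub1:
  assumes g: "goodg g"
  shows "opv (s1 l) (g (opv (EE mu) Q)) = opv (EE (l + mu)) (map_poly (\<lambda>c. opv (s1 l) (g c)) Q)"
proof (induct Q)
  case 0
  then show ?case by (simp add: addh_zero[OF goodg_add[OF g]])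
next
  case (pCons a Q)
  have h0: "opv (s1 l) (g 0) = 0" by (simp add: addh_zero[OF goodg_add[OF g]])
  have "opv (s1 l) (g (opv (EE mu) (pCons a Q))) = opv (s1 l) (g a) + EE (l + mu) (opv (s1 l) (g (opv (EE mu) Q)))"
    by (simp only: opv_pCons[OF addEE] addh_add[OF goodg_add[OF g]] opv_add[OF adds1] goodg_EE[OF g])
  also have "\<dots> = opv (EE (l + mu)) (map_poly (\<lambda>c. opv (s1 l) (g c)) (pCons a Q))"
    by (simp only: map_poly_pCons[where f="\<lambda>c. opv (s1 l) (g c)" and c=a and p=Q, OF h0] opv_pCons[OF addEE] pCons)
  finally show ?case .
qed

lemma goodg_EE2:
  assumes g: "goodg g"
  shows "opv (EE z) (g (EE w y)) = s1 (z - w) (opv (EE z) (g y))"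
proof -
  have "opv (EE z) (g (EE w y)) = - D1 (opv (EE z) (g y)) - EE z (opv (EE z) (g y)) - s1 w (opv (EE z) (g y))"
    unfolding goodg_EEexp[OF g]
    by (simp only: opv_diff[OF addEE] opv_minus[OF addEE] opv_lam[OF addEE] opv_EE_D1 opv_EE_s1map)
  then show ?thesis by (simp add: EE_def s1_diff)
qed

lemma sub2:
  assumes g: "goodg g"
  shows "opv (EE z) (g (opv (EE w) Q)) = opv (EE z) (g (opv (s1 (z - w)) Q))"
proof (induct Q)
  case 0 then show ?case by simp
next
  case (pCons a Q)
  have "opv (EE z) (g (opv (EE w) (pCons a Q))) = opv (EE z) (g a) + s1 (z - w) (opv (EE z) (g (opv (EE w) Q)))"
    by (simp only: opv_pCons[OF addEE] addh_add[OF goodg_add[OF g]] opv_add[OF addEE] goodg_EE2[OF g])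
  also have "\<dots> = opv (EE z) (g (opv (s1 (z - w)) (pCons a Q)))"
    by (simp only: opv_pCons[OF adds1] addh_add[OF goodg_add[OF g]] opv_add[OF addEE] goodg_s[OF g]
        opv_EE_s1map pCons)
  finally show ?case .
qed

lemma gsum_const_id: "addh E \<Longrightarrow> gsum E (\<lambda>x. x) [:a:] = a"
  using opv_const[of E a] by (simp add: opv_def id_def)

definition shp :: "complex \<Rightarrow> 'b poly \<Rightarrow> 'b poly" where
  "shp l P = gsum (\<lambda>Q. lam_mul Q + map_poly (s1 l) Q) (\<lambda>c. [:c:]) P"

lemma shp_ev: "opv (s1 nu) (shp l P) = opv (s1 (l + nu)) P"
proof -
  have "opv (s1 nu) (shp l P) = gsum (s1 (l + nu)) (opv (s1 nu) \<circ> (\<lambda>c. [:c:])) P"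
    unfolding shp_def
    by (rule gsum_comm[OF addh_opv[OF adds1]])
       (simp add: opv_add[OF adds1] opv_lam[OF adds1] opv_s1_s1map s1_add add.commute)
  then show ?thesis by (simp add: opv_def o_def id_def gsum_const_id adds1)
qed

lemma shp_EE: "opv (EE z) (shp l P) = opv (EE (z - l)) P"
proof -
  have "opv (EE z) (shp l P) = gsum (EE (z - l)) (opv (EE z) \<circ> (\<lambda>c. [:c:])) P"
    unfolding shp_def
    by (rule gsum_comm[OF addh_opv[OF addEE]])
       (simp add: opv_add[OF addEE] opv_lam[OF addEE] opv_EE_s1map, simp add: EE_def s1_diff)
  then show ?thesis by (simp add: opv_def o_def id_def gsum_const_id addEE)
qed

lemma xfer:
  assumes "\<And>nu. opv (s1 nu) A = opv (s1 nu) B + opv (s1 nu) C" and E: "addh E"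
  shows "opv E A = opv E B + opv E C"
proof -
  have "A - B - C = 0"
    by (rule vanish[OF m1]) (simp add: opv_diff[OF adds1] assms)
  then have "A = B + C" by (simp add: algebra_simps)
  then show ?thesis by (simp add: opv_add[OF E])
qed

end

context cm begin

lemma crep: "conf_rep s0 D0 br0 s1 D1 rho"
  using rep unfolding NLCA_rep_def by (elim conjE) assumption
lemma rho_bil: "bilinear_lam s0 s1 s1 rho"
  using crep unfolding conf_rep_def by (elim conjE) assumption
lemma rho_ses: "sesquilinear D0 D1 rho"
  using crep unfolding conf_rep_def by (elim conjE) assumption
lemma rho_rep: "\<forall>p q m l mu.
        peval s1 (rho p (peval s1 (rho q m) mu)) l - peval s1 (rho q (peval s1 (rho p m) l)) mu =
        peval s1 (rho (peval s0 (br0 p q) l) m) (l + mu)"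
  using crep unfolding conf_rep_def by (elim conjE) assumption
lemma rho_nij: "\<forall>p m. rho (N0 p) (N1 m) =
        map_poly N1 (rho (N0 p) m + rho p (N1 m) - map_poly N1 (rho p m))"
  using rep unfolding NLCA_rep_def by (elim conjE) assumption

lemma rho_add1: "rho (x + y) m = rho x m + rho y m"
  using rho_bil unfolding bilinear_lam_def by blast
lemma rho_add2: "rho x (m + n) = rho x m + rho x n"
  using rho_bil unfolding bilinear_lam_def by blast
lemma rho_s0: "rho (s0 c x) m = map_poly (s1 c) (rho x m)"
  using rho_bil unfolding bilinear_lam_def spoly_def by blast
lemma rho_s1: "rho x (s1 c m) = map_poly (s1 c) (rho x m)"
  using rho_bil unfolding bilinear_lam_def spoly_def by blast
lemma rho_D0: "rho (D0 x) m = - lam_mul (rho x m)"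
  using rho_ses unfolding sesquilinear_def by blast
lemma rho_D1: "rho x (D1 m) = Dpoly D1 (rho x m) + lam_mul (rho x m)"
  using rho_ses unfolding sesquilinear_def by blast

lemma addrho1: "addh (\<lambda>x. rho x m)" by (simp add: addh_def rho_add1)
lemma addrho2: "addh (rho x)" by (simp add: addh_def rho_add2)

lemma rep_id: "opv (s1 l) (rho p (opv (s1 mu) (rho q m))) - opv (s1 mu) (rho q (opv (s1 l) (rho p m))) =
        opv (s1 (l + mu)) (rho (opv (s0 l) (br0 p q)) m)"
  using rho_rep by (simp add: peval_opv[OF m0] peval_opv[OF m1])

lemma goodg_rho: "goodg (rho p)"
  unfolding goodg_def by (simp add: addrho2 rho_s1 rho_D1)

lemma br1_bil: "bilinear_lam s1 s1 s1 br1"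
  using L1 unfolding LCA_def by (elim conjE) assumption
lemma br1_ses: "sesquilinear D1 D1 br1"
  using L1 unfolding LCA_def by (elim conjE) assumption
lemma br1_skew_all: "\<forall>a b. br1 a b = - neg_subst D1 (br1 b a)"
  using L1 unfolding LCA_def by (elim conjE) assumption
lemma br1_skew: "br1 a b = - neg_subst D1 (br1 b a)"
  using br1_skew_all by (rule allE) (erule allE)
lemma br1_jac_all: "\<forall>a b c l m.
        peval s1 (br1 a (peval s1 (br1 b c) m)) l =
        peval s1 (br1 (peval s1 (br1 a b) l) c) (l + m) + peval s1 (br1 b (peval s1 (br1 a c) l)) m"
  using L1 unfolding LCA_def by (elim conjE) assumption
lemma br1_jac: "opv (s1 l) (br1 a (opv (s1 mu) (br1 b c))) =
        opv (s1 (l + mu)) (br1 (opv (s1 l) (br1 a b)) c) + opv (s1 mu) (br1 b (opv (s1 l) (br1 a c)))"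
  using br1_jac_all[rule_format, of a b c mu l] by (simp only: peval_opv[OF m1])

lemma br0_bil: "bilinear_lam s0 s0 s0 br0"
  using L0 unfolding LCA_def by (elim conjE) assumption
lemma br0_ses: "sesquilinear D0 D0 br0"
  using L0 unfolding LCA_def by (elim conjE) assumption
lemma br0_skew_all: "\<forall>a b. br0 a b = - neg_subst D0 (br0 b a)"
  using L0 unfolding LCA_def by (elim conjE) assumption
lemma br0_skew: "br0 a b = - neg_subst D0 (br0 b a)"
  using br0_skew_all by (rule allE) (erule allE)
lemma br0_jac_all: "\<forall>a b c l m.
        peval s0 (br0 a (peval s0 (br0 b c) m)) l =
        peval s0 (br0 (peval s0 (br0 a b) l) c) (l + m) + peval s0 (br0 b (peval s0 (br0 a c) l)) m"
  using L0 unfolding LCA_def by (elim conjE) assumption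
lemma br0_jac: "opv (s0 l) (br0 a (opv (s0 mu) (br0 b c))) =
        opv (s0 (l + mu)) (br0 (opv (s0 l) (br0 a b)) c) + opv (s0 mu) (br0 b (opv (s0 l) (br0 a c)))"
  using br0_jac_all[rule_format, of a b c mu l] by (simp only: peval_opv[OF m0])

lemma goodg_br1: "goodg (br1 m)"
  using br1_bil br1_ses unfolding goodg_def bilinear_lam_def sesquilinear_def addh_def spoly_def
  by blast

lemma t_cd: "cdlinear s1 D1 s0 D0 t"
  using tm unfolding NLCA_morphism_def by (elim conjE) assumption
lemma t_hom: "module_hom s1 s0 t"
  using t_cd unfolding cdlinear_def by blast
lemma t_D: "t (D1 x) = D0 (t x)"
  using t_cd unfolding cdlinear_def by blast
lemma addt: "addh t"
  using t_hom unfolding module_hom_iff addh_def by blast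
lemma t_s: "t (s1 c x) = s0 c (t x)"
  using t_hom unfolding module_hom_iff by blast
lemma t_N: "t (N1 a) = N0 (t a)"
  using tm unfolding NLCA_morphism_def by blast

lemma opv_t: "opv (s0 l) (map_poly t X) = t (opv (s1 l) X)"
  by (rule opv_map[OF adds1 adds0 addt]) (simp add: t_s)

lemma I2: "opv (s1 l) (rho p (opv (EE mu) (rho r n))) =
   opv (EE (l + mu)) (rho r (opv (s1 l) (rho p n))) + opv (EE mu) (rho (opv (s0 l) (br0 p r)) n)"
proof -
  define U where "U = opv (s0 l) (br0 p r)"
  define PA where "PA = map_poly (\<lambda>c. opv (s1 l) (rho p c)) (rho r n)"
  have 1: "opv (s1 l) (rho p (opv (EE mu) (rho r n))) = opv (EE (l + mu)) PA"
    unfolding PA_def by (rule sub1[OF goodg_rho])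
  have 2: "opv (EE mu) (rho U n) = opv (EE (l + mu)) (shp l (rho U n))"
    by (simp add: shp_EE)
  have hc: "opv (s1 l) (rho p (s1 nu x)) = s1 nu (opv (s1 l) (rho p x))" for nu x
    by (simp add: rho_s1 opv_s1_s1map)
  have 3: "opv (s1 nu) PA = opv (s1 l) (rho p (opv (s1 nu) (rho r n)))" for nu
    unfolding PA_def
    by (rule opv_map[OF adds1 adds1]) (simp_all add: addh_def rho_add2 opv_add[OF adds1] hc)
  have "opv (EE (l + mu)) PA = opv (EE (l + mu)) (rho r (opv (s1 l) (rho p n))) + opv (EE (l + mu)) (shp l (rho U n))"
  proof (rule xfer[OF _ addEE])
    fix nu
    show "opv (s1 nu) PA = opv (s1 nu) (rho r (opv (s1 l) (rho p n))) + opv (s1 nu) (shp l (rho U n))"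
      unfolding 3 shp_ev U_def using rep_id[of l p nu r n] by (simp add: algebra_simps)
  qed
  then show ?thesis using 1 2 U_def by simp
qed

lemma I4: "opv (EE l) (rho (opv (s0 mu) (br0 q r)) m) =
   - opv (EE (l + mu)) (rho r (opv (EE l) (rho q m))) + opv (s1 mu) (rho q (opv (EE l) (rho r m)))"
proof -
  define U where "U = opv (s0 mu) (br0 q r)"
  define PA where "PA = map_poly (\<lambda>c. opv (s1 mu) (rho q c)) (rho r m)"
  have X: "opv (EE (l + mu)) (rho r (opv (EE l) (rho q m))) = opv (EE (l + mu)) (rho r (opv (s1 mu) (rho q m)))"
    using sub2[OF goodg_rho, of "l + mu" r l "rho q m"] by simp
  have Y: "opv (s1 mu) (rho q (opv (EE l) (rho r m))) = opv (EE (l + mu)) PA"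
    unfolding PA_def using sub1[OF goodg_rho, of mu q l "rho r m"] by (simp add: add.commute)
  have Z: "opv (EE l) (rho U m) = opv (EE (l + mu)) (shp mu (rho U m))"
    by (simp add: shp_EE)
  have hc: "opv (s1 mu) (rho q (s1 nu x)) = s1 nu (opv (s1 mu) (rho q x))" for nu x
    by (simp add: rho_s1 opv_s1_s1map)
  have 3: "opv (s1 nu) PA = opv (s1 mu) (rho q (opv (s1 nu) (rho r m)))" for nu
    unfolding PA_def
    by (rule opv_map[OF adds1 adds1]) (simp_all add: addh_def rho_add2 opv_add[OF adds1] hc)
  have "opv (EE (l + mu)) PA = opv (EE (l + mu)) (rho r (opv (s1 mu) (rho q m))) + opv (EE (l + mu)) (shp mu (rho U m))"
  proof (rule xfer[OF _ addEE])
    fix nu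
    show "opv (s1 nu) PA = opv (s1 nu) (rho r (opv (s1 mu) (rho q m))) + opv (s1 nu) (shp mu (rho U m))"
      unfolding 3 shp_ev U_def using rep_id[of mu q nu r m] by (simp add: algebra_simps)
  qed
  then show ?thesis using X Y Z U_def by (simp add: algebra_simps)
qed

lemma I3: "opv (s1 l) (rho p (opv (s1 mu) (br1 n k))) =
   opv (s1 (l + mu)) (br1 (opv (s1 l) (rho p n)) k) + opv (s1 mu) (br1 n (opv (s1 l) (rho p k)))"
  using rep_id[of l p mu "t n" k]
  by (simp add: rhot trho[symmetric] opv_t algebra_simps)

lemma br0_tm: "opv (s0 l) (br0 (t m) q) = - t (opv (EE l) (rho q m))"
proof -
  have "br0 (t m) q = - map_poly t (neg_subst D1 (rho q m))"
    by (simp add: br0_skew[of "t m" q] trho[symmetric] ns_map[OF addt addD1 addD0] t_D)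
  then show ?thesis
    by (simp add: opv_minus[OF adds0] opv_t ev1_ns)
qed

lemma rho_neg1: "rho (- x) m = - rho x m"
  using addh_minus[OF addrho1] by blast

lemma I5: "opv (s1 l) (br1 m (opv (s1 mu) (rho q k))) =
   - opv (s1 (l + mu)) (br1 (opv (EE l) (rho q m)) k) + opv (s1 mu) (rho q (opv (s1 l) (br1 m k)))"
  using rep_id[of l "t m" mu q k]
  by (simp add: rhot br0_tm rho_neg1 opv_minus[OF adds1] algebra_simps)

lemma br1_flip: "opv (EE mu) (br1 w n) = - opv (s1 mu) (br1 n w)"
proof -
  have "opv (EE mu) (br1 w n) = opv (s1 mu) (neg_subst D1 (br1 w n))"
    by (simp add: ev1_ns)
  also have "\<dots> = - opv (s1 mu) (br1 n w)"
    by (simp add: br1_skew[of w n] ns_minus[OF addD1] ns_invol[OF addD1] opv_minus[OF adds1])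
  finally show ?thesis .
qed

lemma I6: "opv (s1 l) (br1 m (opv (EE mu) (rho r n))) =
   opv (EE (l + mu)) (rho r (opv (s1 l) (br1 m n))) + opv (s1 mu) (br1 n (opv (EE l) (rho r m)))"
  using I2[of l "t m" mu r n]
  by (simp add: rhot br0_tm rho_neg1 opv_minus[OF addEE] br1_flip)

end

lemma coeff_pair: "coeff (pair_poly P Q) k = (coeff P k, coeff Q k)"
  by (simp add: pair_poly_def coeff_map_poly zero_prod_def)

lemma pair_eq_iff: "pair_poly P Q = pair_poly P' Q' \<longleftrightarrow> P = P' \<and> Q = Q'"
proof
  assume "pair_poly P Q = pair_poly P' Q'"
  then have "coeff (pair_poly P Q) k = coeff (pair_poly P' Q') k" for k by simp
  then show "P = P' \<and> Q = Q'" by (auto simp: coeff_pair poly_eq_iff)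
qed simp

lemma pair_add: "pair_poly P Q + pair_poly P' Q' = pair_poly (P + P') (Q + Q')"
  by (rule poly_eqI) (simp add: coeff_pair)
lemma pair_minus: "- pair_poly P Q = pair_poly (- P) (- Q)"
  by (rule poly_eqI) (simp add: coeff_pair)
lemma pair_diff: "pair_poly P Q - pair_poly P' Q' = pair_poly (P - P') (Q - Q')"
  by (rule poly_eqI) (simp add: coeff_pair)
lemma pair_map: "f 0 = 0 \<Longrightarrow> g 0 = 0 \<Longrightarrow> map_poly (map_prod f g) (pair_poly P Q) = pair_poly (map_poly f P) (map_poly g Q)"
  by (rule poly_eqI) (simp add: coeff_pair coeff_map_poly zero_prod_def)
lemma pair_map': "(\<And>x y. h (x, y) = (f x, g y)) \<Longrightarrow> f 0 = 0 \<Longrightarrow> g 0 = 0 \<Longrightarrow> map_poly h (pair_poly P Q) = pair_poly (map_poly f P) (map_poly g Q)"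
  by (rule poly_eqI) (simp add: coeff_pair coeff_map_poly zero_prod_def)
lemma pair_lam: "lam_mul (pair_poly P Q) = pair_poly (lam_mul P) (lam_mul Q)"
  by (rule poly_eqI) (simp add: coeff_pair lam_mul_def coeff_pCons zero_prod_def split: nat.split)

context cm begin

definition S :: "complex \<Rightarrow> 'a \<times> 'b \<Rightarrow> 'a \<times> 'b" where "S = (\<lambda>c (p, m). (s0 c p, s1 c m))"
definition DD :: "'a \<times> 'b \<Rightarrow> 'a \<times> 'b" where "DD = map_prod D0 D1"
definition NN :: "'a \<times> 'b \<Rightarrow> 'a \<times> 'b" where "NN = map_prod N0 N1"
definition BB :: "'a \<times> 'b \<Rightarrow> 'a \<times> 'b \<Rightarrow> ('a \<times> 'b) poly" where
  "BB = (\<lambda>(p, m) (q, n). pair_poly (br0 p q) (rho p n - neg_subst D1 (rho q m) + br1 m n))"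

lemma S_app: "S c (p, m) = (s0 c p, s1 c m)" by (simp add: S_def)
lemma DD_app: "DD (p, m) = (D0 p, D1 m)" by (simp add: DD_def)
lemma BB_app: "BB (p, m) (q, n) = pair_poly (br0 p q) (rho p n - neg_subst D1 (rho q m) + br1 m n)"
  by (simp add: BB_def)

lemma mS: "module S"
proof
  fix a b :: complex and x y :: "'a \<times> 'b"
  show "S a (x + y) = S a x + S a y"
    by (cases x, cases y) (simp add: S_app module.scale_right_distrib[OF m0] module.scale_right_distrib[OF m1])
  show "S (a + b) x = S a x + S b x"
    by (cases x) (simp add: S_app module.scale_left_distrib[OF m0] module.scale_left_distrib[OF m1])
  show "S a (S b x) = S (a * b) x"
    by (cases x) (simp add: S_app module.scale_scale[OF m0] module.scale_scale[OF m1])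
  show "S 1 x = x"
    by (cases x) (simp add: S_app module.scale_one[OF m0] module.scale_one[OF m1])
qed

lemma addS: "addh (S z)" by (rule addh_scale[OF mS])

lemma peval_pair: "peval S (pair_poly P Q) z = (opv (s0 z) P, opv (s1 z) Q)"
proof -
  have a: "opv (S z) (map_poly (\<lambda>x. (x, 0)) P) = (opv (s0 z) P, 0)"
    by (rule opv_map[OF adds0 addS]) (simp_all add: addh_def S_app module.scale_zero_right[OF m1])
  have b: "opv (S z) (map_poly (\<lambda>y. (0, y)) Q) = (0, opv (s1 z) Q)"
    by (rule opv_map[OF adds1 addS]) (simp_all add: addh_def S_app module.scale_zero_right[OF m0])
  show ?thesis
    unfolding peval_opv[OF mS] pair_poly_def opv_add[OF addS] a b by simp
qed

lemma addDD: "addh DD"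
  by (simp add: addh_def DD_def addh_add[OF addD0] addh_add[OF addD1])

lemma ns_pair: "neg_subst DD (pair_poly P Q) = pair_poly (neg_subst D0 P) (neg_subst D1 Q)"
proof -
  have a: "neg_subst DD (map_poly (\<lambda>x. (x, 0)) P) = map_poly (\<lambda>x. (x, 0)) (neg_subst D0 P)"
    by (rule ns_map[OF _ addD0 addDD]) (simp_all add: addh_def DD_app addh_zero[OF addD1])
  have b: "neg_subst DD (map_poly (\<lambda>y. (0, y)) Q) = map_poly (\<lambda>y. (0, y)) (neg_subst D1 Q)"
    by (rule ns_map[OF _ addD1 addDD]) (simp_all add: addh_def DD_app addh_zero[OF addD0])
  show ?thesis unfolding pair_poly_def ns_add[OF addDD] a b ..
qed

end

context cm begin

lemma br0_add1: "br0 (x + y) z = br0 x z + br0 y z" using br0_bil unfolding bilinear_lam_def by blast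
lemma br0_add2: "br0 x (y + z) = br0 x y + br0 x z" using br0_bil unfolding bilinear_lam_def by blast
lemma br0_s1: "br0 (s0 c x) z = map_poly (s0 c) (br0 x z)" using br0_bil unfolding bilinear_lam_def spoly_def by blast
lemma br0_s2: "br0 x (s0 c z) = map_poly (s0 c) (br0 x z)" using br0_bil unfolding bilinear_lam_def spoly_def by blast
lemma br0_D1: "br0 (D0 x) z = - lam_mul (br0 x z)" using br0_ses unfolding sesquilinear_def by blast
lemma br0_D2: "br0 x (D0 z) = Dpoly D0 (br0 x z) + lam_mul (br0 x z)" using br0_ses unfolding sesquilinear_def by blast
lemma br1_add1: "br1 (x + y) z = br1 x z + br1 y z" using br1_bil unfolding bilinear_lam_def by blast
lemma br1_add2: "br1 x (y + z) = br1 x y + br1 x z" using br1_bil unfolding bilinear_lam_def by blast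
lemma br1_s1: "br1 (s1 c x) z = map_poly (s1 c) (br1 x z)" using br1_bil unfolding bilinear_lam_def spoly_def by blast
lemma br1_s2: "br1 x (s1 c z) = map_poly (s1 c) (br1 x z)" using br1_bil unfolding bilinear_lam_def spoly_def by blast
lemma br1_D1: "br1 (D1 x) z = - lam_mul (br1 x z)" using br1_ses unfolding sesquilinear_def by blast
lemma br1_D2: "br1 x (D1 z) = Dpoly D1 (br1 x z) + lam_mul (br1 x z)" using br1_ses unfolding sesquilinear_def by blast

lemma addbr1_1: "addh (\<lambda>x. br1 x z)" by (simp add: addh_def br1_add1)
lemma addbr1_2: "addh (br1 x)" by (simp add: addh_def br1_add2)
lemma addbr0_1: "addh (\<lambda>x. br0 x z)" by (simp add: addh_def br0_add1)
lemma addbr0_2: "addh (br0 x)" by (simp add: addh_def br0_add2)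

lemma rho_neg2: "rho x (- m) = - rho x m" using addh_minus[OF addrho2] by blast
lemma rho_diff2: "rho x (m - n) = rho x m - rho x n" using addh_diff[OF addrho2] by blast
lemma rho_diff1: "rho (x - y) m = rho x m - rho y m" using addh_diff[OF addrho1] by blast
lemma br1_neg1: "br1 (- x) m = - br1 x m" using addh_minus[OF addbr1_1] by blast
lemma br1_diff1: "br1 (x - y) m = br1 x m - br1 y m" using addh_diff[OF addbr1_1] by blast
lemma br1_neg2: "br1 x (- m) = - br1 x m" using addh_minus[OF addbr1_2] by blast
lemma br1_diff2: "br1 x (m - n) = br1 x m - br1 x n" using addh_diff[OF addbr1_2] by blast

lemma ns_s1: "neg_subst D1 (map_poly (s1 c) X) = map_poly (s1 c) (neg_subst D1 X)"
  by (rule ns_map[OF adds1 addD1 addD1]) (simp add: D1s)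

lemma spoly_pair: "spoly S c (pair_poly P Q) = pair_poly (spoly s0 c P) (spoly s1 c Q)"
  unfolding spoly_def
  by (rule pair_map') (simp_all add: S_app module.scale_zero_right[OF m0] module.scale_zero_right[OF m1])

lemma Dpoly_pair: "Dpoly DD (pair_poly P Q) = pair_poly (Dpoly D0 P) (Dpoly D1 Q)"
  unfolding Dpoly_def
  by (rule pair_map') (simp_all add: DD_app addh_zero[OF addD0] addh_zero[OF addD1])

lemma bil: "bilinear_lam S S S BB"
  unfolding bilinear_lam_def
proof (intro conjI allI)
  fix x y z :: "'a \<times> 'b" and c :: complex
  show "BB (x + y) z = BB x z + BB y z"
    by (cases x, cases y, cases z)
       (simp add: BB_app pair_add br0_add1 rho_add1 rho_add2 ns_add[OF addD1] br1_add1 algebra_simps)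
  show "BB x (y + z) = BB x y + BB x z"
    by (cases x, cases y, cases z)
       (simp add: BB_app pair_add br0_add2 rho_add1 rho_add2 ns_add[OF addD1] br1_add2 algebra_simps)
  show "BB (S c x) z = spoly S c (BB x z)"
    by (cases x, cases z)
       (simp add: BB_app S_app spoly_pair[unfolded spoly_def] spoly_def br0_s1 rho_s0 rho_s1 ns_s1 br1_s1
          map_poly_addh[OF adds1] map_poly_diff'[OF adds1])
  show "BB x (S c z) = spoly S c (BB x z)"
    by (cases x, cases z)
       (simp add: BB_app S_app spoly_pair[unfolded spoly_def] spoly_def br0_s2 rho_s0 rho_s1 ns_s1 br1_s2
          map_poly_addh[OF adds1] map_poly_diff'[OF adds1])
qed

lemma lam_add: "lam_mul (P + Q :: 'c::ab_group_add poly) = lam_mul P + lam_mul Q" using addh_add[OF addh_lam] by blast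
lemma lam_diff: "lam_mul (P - Q :: 'c::ab_group_add poly) = lam_mul P - lam_mul Q" using addh_diff[OF addh_lam] by blast
lemma lam_minus: "lam_mul (- P :: 'c::ab_group_add poly) = - lam_mul P" using addh_minus[OF addh_lam] by blast

lemma ses: "sesquilinear DD DD BB"
  unfolding sesquilinear_def
proof (intro conjI allI)
  fix a b :: "'a \<times> 'b"
  show "BB (DD a) b = - lam_mul (BB a b)"
    by (cases a, cases b)
       (simp add: BB_app DD_app pair_lam pair_minus br0_D1 rho_D0 rho_D1 br1_D1 ns_add[OF addD1]
         ns_Dpoly[OF addD1] ns_lam[OF addD1] neg_shift_def lam_add lam_diff lam_minus)
  show "BB a (DD b) = Dpoly DD (BB a b) + lam_mul (BB a b)"
    by (cases a, cases b)
       (simp add: BB_app DD_app pair_lam pair_add Dpoly_pair[unfolded Dpoly_def] br0_D2 rho_D0 rho_D1 br1_D2 ns_minus[OF addD1]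
         ns_lam[OF addD1] neg_shift_def lam_add lam_diff lam_minus Dpoly_def map_poly_addh[OF addD1]
         map_poly_diff'[OF addD1] algebra_simps)
qed

lemma skew: "BB a b = - neg_subst DD (BB b a)"
proof (cases a, cases b)
  fix p m q n assume ab: "a = (p, m)" "b = (q, n)"
  show ?thesis
    unfolding ab
    by (simp add: BB_app ns_pair pair_minus br0_skew[of p q] br1_skew[of m n] ns_add[OF addD1]
        ns_diff[OF addD1] ns_minus[OF addD1] ns_invol[OF addD1] algebra_simps)
qed

lemma cdm: "cdmodule S DD"
  unfolding cdmodule_def module_hom_iff
proof (intro conjI allI mS)
  fix x y :: "'a \<times> 'b" and c :: complex
  show "DD (x + y) = DD x + DD y" using addDD addh_add by blast
  show "DD (S c x) = S c (DD x)" by (cases x) (simp add: DD_app S_app D0s D1s)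
qed

lemma N0h: "module_hom s0 s0 N0" and N0D: "N0 (D0 x) = D0 (N0 x)"
  using N0c unfolding cdlinear_def by blast+
lemma N1h: "module_hom s1 s1 N1" and N1D: "N1 (D1 x) = D1 (N1 x)"
  using N1c unfolding cdlinear_def by blast+
lemma addN0: "addh N0" using N0h unfolding module_hom_iff addh_def by blast
lemma addN1: "addh N1" using N1h unfolding module_hom_iff addh_def by blast

lemma cdl: "cdlinear S DD S DD NN"
  unfolding cdlinear_def module_hom_iff
proof (intro conjI allI mS)
  fix x y :: "'a \<times> 'b" and c :: complex
  show "NN (x + y) = NN x + NN y"
    by (cases x, cases y) (simp add: NN_def addh_add[OF addN0] addh_add[OF addN1])
  show "NN (S c x) = S c (NN x)"
    using N0h N1h unfolding module_hom_iff by (cases x) (simp add: NN_def S_app)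
  show "NN (DD x) = DD (NN x)" by (cases x) (simp add: NN_def DD_app N0D N1D)
qed

lemma ns_N1: "neg_subst D1 (map_poly N1 X) = map_poly N1 (neg_subst D1 X)"
  by (rule ns_map[OF addN1 addD1 addD1]) (simp add: N1D)

lemma NN_app: "NN (p, m) = (N0 p, N1 m)" by (simp add: NN_def)

lemma NN_pair: "map_poly NN (pair_poly P Q) = pair_poly (map_poly N0 P) (map_poly N1 Q)"
  by (rule pair_map') (simp_all add: NN_def addh_zero[OF addN0] addh_zero[OF addN1])

lemma nij: "nijenhuis BB NN"
  unfolding nijenhuis_def
proof (intro allI)
  fix a b :: "'a \<times> 'b"
  obtain p m where a: "a = (p, m)" by (cases a)
  obtain q n where b: "b = (q, n)" by (cases b)
  have r1: "rho (N0 p) (N1 n) = map_poly N1 (rho (N0 p) n + rho p (N1 n) - map_poly N1 (rho p n))"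
    using rho_nij by blast
  have r2: "rho (N0 q) (N1 m) = map_poly N1 (rho (N0 q) m + rho q (N1 m) - map_poly N1 (rho q m))"
    using rho_nij by blast
  have b0: "br0 (N0 p) (N0 q) = map_poly N0 (br0 (N0 p) q + br0 p (N0 q) - map_poly N0 (br0 p q))"
    using N0n unfolding nijenhuis_def by blast
  have b1: "br1 (N1 m) (N1 n) = map_poly N1 (br1 (N1 m) n + br1 m (N1 n) - map_poly N1 (br1 m n))"
    using N1n unfolding nijenhuis_def by blast
  show "BB (NN a) (NN b) = map_poly NN (BB (NN a) b + BB a (NN b) - map_poly NN (BB a b))"
    unfolding a b NN_app
    by (simp add: BB_app NN_pair pair_add pair_diff r1 r2 b0 b1 ns_N1
        map_poly_addh[OF addN1] map_poly_diff'[OF addN1] map_poly_addh[OF addN0] map_poly_diff'[OF addN0]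
        ns_add[OF addD1] ns_diff[OF addD1] algebra_simps)
qed

lemma I1: "opv (s1 l) (rho p (opv (s1 mu) (rho q k))) =
   opv (s1 mu) (rho q (opv (s1 l) (rho p k))) + opv (s1 (l + mu)) (rho (opv (s0 l) (br0 p q)) k)"
  using rep_id[of l p mu q k] by (simp add: algebra_simps)

lemma opv_EE_minus: "opv (EE z) (- P) = - opv (EE z) P" by (rule opv_minus[OF addEE])
lemma opv_EE_add: "opv (EE z) (P + Q) = opv (EE z) P + opv (EE z) Q" by (rule opv_add[OF addEE])
lemma opv_EE_diff: "opv (EE z) (P - Q) = opv (EE z) P - opv (EE z) Q" by (rule opv_diff[OF addEE])
lemma opv_s1_minus: "opv (s1 z) (- P) = - opv (s1 z) P" by (rule opv_minus[OF adds1])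
lemma opv_s1_add: "opv (s1 z) (P + Q) = opv (s1 z) P + opv (s1 z) Q" by (rule opv_add[OF adds1])
lemma opv_s1_diff: "opv (s1 z) (P - Q) = opv (s1 z) P - opv (s1 z) Q" by (rule opv_diff[OF adds1])

lemma ab14:
  fixes A B C D E F G H I J K L M N :: "'x::ab_group_add"
  shows "A + B - (C + D) + (E + F) - (- G + H) + (- I + J - (K + L) + (M + N)) =
    B - (C - G + K) + (E - I + M) + (A - H + J - D + (F - L + N))"
  by (simp add: algebra_simps)

lemma jac: "peval S (BB a (peval S (BB b c) mu)) l =
    peval S (BB (peval S (BB a b) l) c) (l + mu) + peval S (BB b (peval S (BB a c) l)) mu"
proof -
  obtain p m where a: "a = (p, m)" by (cases a)
  obtain q n where b: "b = (q, n)" by (cases b)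
  obtain r k where c: "c = (r, k)" by (cases c)
  note exps = ev1_ns opv_EE_minus opv_EE_add opv_EE_diff opv_s1_minus opv_s1_add opv_s1_diff
    rho_add2 rho_diff2 rho_neg2 br1_add1 br1_diff1 br1_neg1 br1_add2 br1_diff2 br1_neg2
    ns_add[OF addD1] ns_diff[OF addD1] ns_minus[OF addD1]
  have L1: "opv (s1 l) (rho p (opv (s1 mu) (rho q k - neg_subst D1 (rho r n) + br1 n k))
      - neg_subst D1 (rho (opv (s0 mu) (br0 q r)) m)
      + br1 m (opv (s1 mu) (rho q k - neg_subst D1 (rho r n) + br1 n k))) =
    opv (s1 (l + mu)) (rho (opv (s0 l) (br0 p q)) k
      - neg_subst D1 (rho r (opv (s1 l) (rho p n - neg_subst D1 (rho q m) + br1 m n)))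
      + br1 (opv (s1 l) (rho p n - neg_subst D1 (rho q m) + br1 m n)) k)
    + opv (s1 mu) (rho q (opv (s1 l) (rho p k - neg_subst D1 (rho r m) + br1 m k))
      - neg_subst D1 (rho (opv (s0 l) (br0 p r)) n)
      + br1 n (opv (s1 l) (rho p k - neg_subst D1 (rho r m) + br1 m k)))"
    apply (simp only: exps)
    apply (simp only: I1[of l p mu q k] I2[of l p mu r n] I3[of l p mu n k] I4[of l mu q r m]
        I5[of l m mu q k] I6[of l m mu r n] br1_jac[of l m mu n k])
    apply (rule ab14)
    done
  show ?thesis
    unfolding a b c by (simp only: BB_app peval_pair prod.case br0_jac[of l p mu q r] L1 prod_eq_iff fst_add snd_add fst_conv snd_conv)
qed

theorem main: "NLCA S DD BB NN"
  unfolding NLCA_def LCA_def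
  using cdm bil ses skew jac cdl nij by blast

end

theorem proposition4p9:
  fixes s0 :: "complex \<Rightarrow> 'a::ab_group_add \<Rightarrow> 'a" and D0 :: "'a \<Rightarrow> 'a"
    and br0 :: "'a \<Rightarrow> 'a \<Rightarrow> 'a poly" and N0 :: "'a \<Rightarrow> 'a"
    and s1 :: "complex \<Rightarrow> 'b::ab_group_add \<Rightarrow> 'b" and D1 :: "'b \<Rightarrow> 'b"
    and br1 :: "'b \<Rightarrow> 'b \<Rightarrow> 'b poly" and N1 :: "'b \<Rightarrow> 'b"
    and t :: "'b \<Rightarrow> 'a" and rho :: "'a \<Rightarrow> 'b \<Rightarrow> 'b poly"
  assumes "crossed_module s0 D0 br0 N0 s1 D1 br1 N1 t rho"
  shows "NLCA (\<lambda>c (p, m). (s0 c p, s1 c m)) (map_prod D0 D1)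
           (\<lambda>(p, m) (q, n). pair_poly (br0 p q) (rho p n - neg_subst D1 (rho q m) + br1 m n))
           (map_prod N0 N1)"
proof -
  interpret c: cm s0 D0 br0 N0 s1 D1 br1 N1 t rho
    using assms by (simp add: cm_def)
  show ?thesis
    using c.main unfolding c.S_def c.DD_def c.BB_def c.NN_def .
qed

end
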